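(* The generalized categories (as 0-cells), the functors between them (as 1-cells), and the natural transformations between such functors (as 2-cells) form a strict 2-category. Here 1-cells compose by composition of maps; vertical composition of natural transformations $\alpha: F \Rightarrow G$ and $\beta: G \Rightarrow H$ between functors $F,G,H:\mathcal{C}\to\mathcal{D}$ is $(\beta \circ \alpha)(x) = \beta(x)\cdot\alpha(x)$; the identity 2-cell on $F$ is $x \mapsto 1_{F(x)}$; and horizontal composition $\beta\star\alpha$ of $\alpha: F\Rightarrow G$ (with $F,G:\mathcal{C}\to\mathcal{D}$) and $\beta: F'\Rightarrow G'$ (with $F',G':\mathcal{D}\to\mathcal{E}$) is given by the same formula as for ordinary categories, $(\beta\star\alpha)(x) = G'(\alpha(x))\cdot \beta(F(x))$.
   Context: A generalized category is a tuple $(\mathcal{C},\le,s,t,\cdot)$ where $\mathcal{C}$ is a set, $\le$ a relation on $\mathcal{C}$, $s,t:\mathcal{C}\to\mathcal{C}$ maps (write $\bar a = s(a)$, $\hat a = t(a)$), and $\cdot$ a partially defined binary operation (write $ab$), such that: (1) $\le$ is a partial order; (2) $ab$ is defined iff $s(a)\le t(b)$; (3) if $(ab)c$ or $a(bc)$ is defined then $(ab)c=a(bc)$; (4) if $ab$ is defined then $s(ab)=s(b)$ and $t(ab)=t(a)$; (5) for every $a$ there is $b$ with $s(b)=t(b)=a$ such that $bc=c$ whenever $bc$ is defined and $cb=c$ whenever $cb$ is defined; this $b$ is unique, denoted $1_a$; (6) if $s(a)=t(a)=a$ then $ba=b$ whenever $ba$ is defined and $ab=b$ whenever $ab$ is defined;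 (7) if $a\le b$ then $s(a)\le s(b)$, $t(a)\le t(b)$ and $1_a\le 1_b$; and if $a\le b$, $c\le d$ and $ac,bd$ are defined then $ac\le bd$. A functor $F:\mathcal{C}\to\mathcal{D}$ is a map with $a\le b\Rightarrow F(a)\le F(b)$, $F(\bar a)=\overline{F(a)}$, $F(\hat a)=\widehat{F(a)}$, $F(ab)=F(a)F(b)$ whenever $ab$ is defined, and $F(1_a)=1_{F(a)}$. For functors $F,G:\mathcal{C}\to\mathcal{D}$, a natural transformation $F\Rightarrow G$ is a pair $(\theta_1,\theta_2)$ of maps $\mathcal{C}\to\mathcal{D}$ such that for all $a$, $\theta_1(a)F(a)$ and $G(a)\theta_2(a)$ are defined and equal, $\theta_1(a)=\theta_1(b)$ whenever $\hat a=\hat b$, and $\theta_2(a)=\theta_2(b)$ whenever $\bar a=\bar b$. Then $\theta_1(1_x)=\theta_2(1_x)$ for all $x$, and the transformation is identified with the single map $\theta(x):=\theta_1(1_x)$, which satisfies $\theta(\hat f)\cdot F(f)=G(f)\cdot\theta(\bar f)$ for all $f$. *)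

theory Defs
  imports Main
begin

text \<open>The composition is
  represented by a total function; it is regarded as defined exactly when
  the source of the first argument is below the target of the second.\<close>

record 'a gcat =
  gobj :: "'a set"
  gle  :: "'a \<Rightarrow> 'a \<Rightarrow> bool"
  gsrc :: "'a \<Rightarrow> 'a"
  gtgt :: "'a \<Rightarrow> 'a"
  gcmp :: "'a \<Rightarrow> 'a \<Rightarrow> 'a"

definition gdef :: "'a gcat \<Rightarrow> 'a \<Rightarrow> 'a \<Rightarrow> bool" where
  "gdef C a b \<longleftrightarrow> gle C (gsrc C a) (gtgt C b)"

definition is_unit :: "'a gcat \<Rightarrow> 'a \<Rightarrow> 'a \<Rightarrow> bool" where
  "is_unit C a b \<longleftrightarrow> b \<in> gobj C \<and> gsrc C b = a \<and> gtgt C b = a \<and>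
     (\<forall>c\<in>gobj C. gdef C b c \<longrightarrow> gcmp C b c = c) \<and>
     (\<forall>c\<in>gobj C. gdef C c b \<longrightarrow> gcmp C c b = c)"

definition gid :: "'a gcat \<Rightarrow> 'a \<Rightarrow> 'a" where
  "gid C a = (THE b. is_unit C a b)"

definition generalized_category :: "'a gcat \<Rightarrow> bool" where
  "generalized_category C \<longleftrightarrow>
     (\<forall>a\<in>gobj C. gsrc C a \<in> gobj C \<and> gtgt C a \<in> gobj C) \<and>
     \<comment> \<open>(1) partial order\<close>
     (\<forall>a\<in>gobj C. gle C a a) \<and>
     (\<forall>a\<in>gobj C. \<forall>b\<in>gobj C. gle C a b \<longrightarrow> gle C b a \<longrightarrow> a = b) \<and>
     (\<forall>a\<in>gobj C. \<forall>b\<in>gobj C. \<forall>c\<in>gobj C. gle C a b \<longrightarrow> gle C b c \<longrightarrow> gle C a c) \<and>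
     \<comment> \<open>(2) composition is defined iff s(a) <= t(b), and then lies in the carrier\<close>
     (\<forall>a\<in>gobj C. \<forall>b\<in>gobj C. gdef C a b \<longrightarrow> gcmp C a b \<in> gobj C) \<and>
     \<comment> \<open>(3) associativity\<close>
     (\<forall>a\<in>gobj C. \<forall>b\<in>gobj C. \<forall>c\<in>gobj C.
        ((gdef C a b \<and> gdef C (gcmp C a b) c) \<or> (gdef C b c \<and> gdef C a (gcmp C b c))) \<longrightarrow>
        (gdef C a b \<and> gdef C (gcmp C a b) c \<and> gdef C b c \<and> gdef C a (gcmp C b c) \<and>
         gcmp C (gcmp C a b) c = gcmp C a (gcmp C b c))) \<and>
     \<comment> \<open>(4)\<close>
     (\<forall>a\<in>gobj C. \<forall>b\<in>gobj C. gdef C a b \<longrightarrow>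
        gsrc C (gcmp C a b) = gsrc C b \<and> gtgt C (gcmp C a b) = gtgt C a) \<and>
     \<comment> \<open>(5) unique identities\<close>
     (\<forall>a\<in>gobj C. \<exists>!b. is_unit C a b) \<and>
     \<comment> \<open>(6)\<close>
     (\<forall>a\<in>gobj C. gsrc C a = a \<and> gtgt C a = a \<longrightarrow>
        (\<forall>b\<in>gobj C. gdef C b a \<longrightarrow> gcmp C b a = b) \<and>
        (\<forall>b\<in>gobj C. gdef C a b \<longrightarrow> gcmp C a b = b)) \<and>
     \<comment> \<open>(7)\<close>
     (\<forall>a\<in>gobj C. \<forall>b\<in>gobj C. gle C a b \<longrightarrow>
        gle C (gsrc C a) (gsrc C b) \<and> gle C (gtgt C a) (gtgt C b) \<and> gle C (gid C a) (gid C b)) \<and>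
     (\<forall>a\<in>gobj C. \<forall>b\<in>gobj C. \<forall>c\<in>gobj C. \<forall>d\<in>gobj C.
        gle C a b \<longrightarrow> gle C c d \<longrightarrow> gdef C a c \<longrightarrow> gdef C b d \<longrightarrow>
        gle C (gcmp C a c) (gcmp C b d))"

definition gfunctor :: "'a gcat \<Rightarrow> 'b gcat \<Rightarrow> ('a \<Rightarrow> 'b) \<Rightarrow> bool" where
  "gfunctor C D F \<longleftrightarrow>
     (\<forall>a\<in>gobj C. F a \<in> gobj D) \<and>
     (\<forall>a\<in>gobj C. \<forall>b\<in>gobj C. gle C a b \<longrightarrow> gle D (F a) (F b)) \<and>
     (\<forall>a\<in>gobj C. F (gsrc C a) = gsrc D (F a)) \<and>
     (\<forall>a\<in>gobj C. F (gtgt C a) = gtgt D (F a)) \<and>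
     (\<forall>a\<in>gobj C. \<forall>b\<in>gobj C. gdef C a b \<longrightarrow> F (gcmp C a b) = gcmp D (F a) (F b)) \<and>
     (\<forall>a\<in>gobj C. F (gid C a) = gid D (F a))"

definition nat_pair :: "'a gcat \<Rightarrow> 'b gcat \<Rightarrow> ('a \<Rightarrow> 'b) \<Rightarrow> ('a \<Rightarrow> 'b) \<Rightarrow>
    ('a \<Rightarrow> 'b) \<Rightarrow> ('a \<Rightarrow> 'b) \<Rightarrow> bool" where
  "nat_pair C D F G \<theta>1 \<theta>2 \<longleftrightarrow>
     (\<forall>a\<in>gobj C. \<theta>1 a \<in> gobj D \<and> \<theta>2 a \<in> gobj D) \<and>
     (\<forall>a\<in>gobj C. gdef D (\<theta>1 a) (F a) \<and> gdef D (G a) (\<theta>2 a) \<and>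
        gcmp D (\<theta>1 a) (F a) = gcmp D (G a) (\<theta>2 a)) \<and>
     (\<forall>a\<in>gobj C. \<forall>b\<in>gobj C. gtgt C a = gtgt C b \<longrightarrow> \<theta>1 a = \<theta>1 b) \<and>
     (\<forall>a\<in>gobj C. \<forall>b\<in>gobj C. gsrc C a = gsrc C b \<longrightarrow> \<theta>2 a = \<theta>2 b)"

text \<open>2-cells F \<Rightarrow> G: maps \<theta> (on the carrier of C) arising as \<theta>(x) = \<theta>1(1_x)
  from a natural transformation (\<theta>1,\<theta>2) between functors F, G.\<close>
definition nat_trans :: "'a gcat \<Rightarrow> 'b gcat \<Rightarrow> ('a \<Rightarrow> 'b) \<Rightarrow> ('a \<Rightarrow> 'b) \<Rightarrow> ('a \<Rightarrow> 'b) \<Rightarrow> bool" where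
  "nat_trans C D F G \<theta> \<longleftrightarrow> gfunctor C D F \<and> gfunctor C D G \<and>
     (\<exists>\<theta>1 \<theta>2. nat_pair C D F G \<theta>1 \<theta>2 \<and> (\<forall>x\<in>gobj C. \<theta> x = \<theta>1 (gid C x)))"

definition eq_on :: "'a set \<Rightarrow> ('a \<Rightarrow> 'b) \<Rightarrow> ('a \<Rightarrow> 'b) \<Rightarrow> bool" where
  "eq_on A f g \<longleftrightarrow> (\<forall>x\<in>A. f x = g x)"

definition vcomp :: "'b gcat \<Rightarrow> ('a \<Rightarrow> 'b) \<Rightarrow> ('a \<Rightarrow> 'b) \<Rightarrow> 'a \<Rightarrow> 'b" where
  "vcomp D \<beta> \<alpha> = (\<lambda>x. gcmp D (\<beta> x) (\<alpha> x))"

definition idtrans :: "'b gcat \<Rightarrow> ('a \<Rightarrow> 'b) \<Rightarrow> 'a \<Rightarrow> 'b" where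
  "idtrans D F = (\<lambda>x. gid D (F x))"

definition hcomp :: "'c gcat \<Rightarrow> ('b \<Rightarrow> 'c) \<Rightarrow> ('a \<Rightarrow> 'b) \<Rightarrow> ('b \<Rightarrow> 'c) \<Rightarrow> ('a \<Rightarrow> 'b) \<Rightarrow> 'a \<Rightarrow> 'c" where
  "hcomp E G' F \<beta> \<alpha> = (\<lambda>x. gcmp E (G' (\<alpha> x)) (\<beta> (F x)))"

end

theory Submission
  imports Defs
begin





lemma gc_src: "generalized_category C \<Longrightarrow> a \<in> gobj C \<Longrightarrow> gsrc C a \<in> gobj C"
  by (simp add: generalized_category_def)
lemma gc_tgt: "generalized_category C \<Longrightarrow> a \<in> gobj C \<Longrightarrow> gtgt C a \<in> gobj C"
  by (simp add: generalized_category_def)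
lemma gc_refl: "generalized_category C \<Longrightarrow> a \<in> gobj C \<Longrightarrow> gle C a a"
  by (simp add: generalized_category_def)
lemma gc_cmp: "generalized_category C \<Longrightarrow> a \<in> gobj C \<Longrightarrow> b \<in> gobj C \<Longrightarrow> gdef C a b \<Longrightarrow> gcmp C a b \<in> gobj C"
  unfolding generalized_category_def by blast
lemma gc_src_cmp: "generalized_category C \<Longrightarrow> a \<in> gobj C \<Longrightarrow> b \<in> gobj C \<Longrightarrow> gdef C a b \<Longrightarrow> gsrc C (gcmp C a b) = gsrc C b"
  unfolding generalized_category_def by blast
lemma gc_tgt_cmp: "generalized_category C \<Longrightarrow> a \<in> gobj C \<Longrightarrow> b \<in> gobj C \<Longrightarrow> gdef C a b \<Longrightarrow> gtgt C (gcmp C a b) = gtgt C a"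
  unfolding generalized_category_def by blast
lemma gc_assoc: "generalized_category C \<Longrightarrow> a \<in> gobj C \<Longrightarrow> b \<in> gobj C \<Longrightarrow> c \<in> gobj C \<Longrightarrow>
   gdef C a b \<Longrightarrow> gdef C b c \<Longrightarrow> gcmp C (gcmp C a b) c = gcmp C a (gcmp C b c)"
proof -
  assume G: "generalized_category C" and m: "a \<in> gobj C" "b \<in> gobj C" "c \<in> gobj C"
    and d: "gdef C a b" "gdef C b c"
  have "gdef C a (gcmp C b c)"
    using d gc_tgt_cmp[OF G m(2,3) d(2)] unfolding gdef_def by simp
  have raw: "\<forall>a\<in>gobj C. \<forall>b\<in>gobj C. \<forall>c\<in>gobj C.
        ((gdef C a b \<and> gdef C (gcmp C a b) c) \<or> (gdef C b c \<and> gdef C a (gcmp C b c))) \<longrightarrow>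
        (gdef C a b \<and> gdef C (gcmp C a b) c \<and> gdef C b c \<and> gdef C a (gcmp C b c) \<and>
         gcmp C (gcmp C a b) c = gcmp C a (gcmp C b c))"
    using G unfolding generalized_category_def by (elim conjE) assumption
  have "((gdef C a b \<and> gdef C (gcmp C a b) c) \<or> (gdef C b c \<and> gdef C a (gcmp C b c))) \<longrightarrow>
        (gdef C a b \<and> gdef C (gcmp C a b) c \<and> gdef C b c \<and> gdef C a (gcmp C b c) \<and>
         gcmp C (gcmp C a b) c = gcmp C a (gcmp C b c))"
    using raw m by blast
  then show ?thesis using d \<open>gdef C a (gcmp C b c)\<close> by blast
qed
lemma gdef_eq: "generalized_category C \<Longrightarrow> b \<in> gobj C \<Longrightarrow> gsrc C a = gtgt C b \<Longrightarrow> gdef C a b"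
  unfolding gdef_def by (simp add: gc_refl gc_tgt)

lemma gc_unit: "generalized_category C \<Longrightarrow> a \<in> gobj C \<Longrightarrow> is_unit C a (gid C a)"
  unfolding gid_def generalized_category_def by (metis theI')

lemma gid_in: "generalized_category C \<Longrightarrow> a \<in> gobj C \<Longrightarrow> gid C a \<in> gobj C"
  using gc_unit is_unit_def by metis
lemma gid_src[simp]: "generalized_category C \<Longrightarrow> a \<in> gobj C \<Longrightarrow> gsrc C (gid C a) = a"
  using gc_unit is_unit_def by metis
lemma gid_tgt[simp]: "generalized_category C \<Longrightarrow> a \<in> gobj C \<Longrightarrow> gtgt C (gid C a) = a"
  using gc_unit is_unit_def by metis
lemma gid_left: "generalized_category C \<Longrightarrow> a \<in> gobj C \<Longrightarrow> c \<in> gobj C \<Longrightarrow> gdef C (gid C a) c \<Longrightarrow> gcmp C (gid C a) c = c"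
  using gc_unit is_unit_def by metis
lemma gid_right: "generalized_category C \<Longrightarrow> a \<in> gobj C \<Longrightarrow> c \<in> gobj C \<Longrightarrow> gdef C c (gid C a) \<Longrightarrow> gcmp C c (gid C a) = c"
  using gc_unit is_unit_def by metis

lemma gf_in: "gfunctor C D F \<Longrightarrow> a \<in> gobj C \<Longrightarrow> F a \<in> gobj D"
  unfolding gfunctor_def by blast
lemma gf_src: "gfunctor C D F \<Longrightarrow> a \<in> gobj C \<Longrightarrow> F (gsrc C a) = gsrc D (F a)"
  unfolding gfunctor_def by blast
lemma gf_tgt: "gfunctor C D F \<Longrightarrow> a \<in> gobj C \<Longrightarrow> F (gtgt C a) = gtgt D (F a)"
  unfolding gfunctor_def by blast
lemma gf_cmp: "gfunctor C D F \<Longrightarrow> a \<in> gobj C \<Longrightarrow> b \<in> gobj C \<Longrightarrow> gdef C a b \<Longrightarrow> F (gcmp C a b) = gcmp D (F a) (F b)"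
  unfolding gfunctor_def by blast
lemma gf_gid: "gfunctor C D F \<Longrightarrow> a \<in> gobj C \<Longrightarrow> F (gid C a) = gid D (F a)"
  unfolding gfunctor_def by blast
lemma gf_mono: "gfunctor C D F \<Longrightarrow> a \<in> gobj C \<Longrightarrow> b \<in> gobj C \<Longrightarrow> gle C a b \<Longrightarrow> gle D (F a) (F b)"
  unfolding gfunctor_def by blast

lemma gf_id: "generalized_category C \<Longrightarrow> gfunctor C C id"
  unfolding gfunctor_def by simp

lemma gf_comp: "generalized_category C \<Longrightarrow> gfunctor C D F \<Longrightarrow> gfunctor D E G \<Longrightarrow> gfunctor C E (G \<circ> F)"
proof -
  assume GC: "generalized_category C" and F: "gfunctor C D F" and G: "gfunctor D E G"
  have d: "gdef D (F a) (F b)" if "a \<in> gobj C" "b \<in> gobj C" "gdef C a b" for a b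
    using that gf_mono[OF F gc_src[OF GC that(1)] gc_tgt[OF GC that(2)]]
      gf_src[OF F that(1)] gf_tgt[OF F that(2)] unfolding gdef_def by simp
  show ?thesis unfolding gfunctor_def comp_def
  proof (intro conjI ballI impI)
    fix a assume a: "a \<in> gobj C"
    show "G (F a) \<in> gobj E" by (rule gf_in[OF G gf_in[OF F a]])
    show "G (F (gsrc C a)) = gsrc E (G (F a))" using gf_src[OF F a] gf_src[OF G gf_in[OF F a]] by simp
    show "G (F (gtgt C a)) = gtgt E (G (F a))" using gf_tgt[OF F a] gf_tgt[OF G gf_in[OF F a]] by simp
    show "G (F (gid C a)) = gid E (G (F a))" using gf_gid[OF F a] gf_gid[OF G gf_in[OF F a]] by simp
  next
    fix a b assume a: "a \<in> gobj C" and b: "b \<in> gobj C"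
    { assume "gle C a b" then show "gle E (G (F a)) (G (F b))"
        using gf_mono[OF G gf_in[OF F a] gf_in[OF F b]] gf_mono[OF F a b] by simp }
    { assume ab: "gdef C a b" then show "G (F (gcmp C a b)) = gcmp E (G (F a)) (G (F b))"
        using gf_cmp[OF F a b ab] gf_cmp[OF G gf_in[OF F a] gf_in[OF F b] d[OF a b ab]] by simp }
  qed
qed

definition natural :: "'a gcat \<Rightarrow> 'b gcat \<Rightarrow> ('a \<Rightarrow> 'b) \<Rightarrow> ('a \<Rightarrow> 'b) \<Rightarrow> ('a \<Rightarrow> 'b) \<Rightarrow> bool" where
  "natural C D F G \<theta> \<longleftrightarrow> gfunctor C D F \<and> gfunctor C D G \<and>
    (\<forall>x\<in>gobj C. \<theta> x \<in> gobj D \<and> gsrc D (\<theta> x) = F x \<and> gtgt D (\<theta> x) = G x) \<and>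
    (\<forall>a\<in>gobj C. gcmp D (\<theta> (gtgt C a)) (F a) = gcmp D (G a) (\<theta> (gsrc C a)))"

lemma nat_to_natural:
  assumes GC: "generalized_category C" and GD: "generalized_category D"
    and N: "nat_trans C D F G \<theta>"
  shows "natural C D F G \<theta>"
proof -
  have FF: "gfunctor C D F" and FG: "gfunctor C D G" using N unfolding nat_trans_def by auto
  obtain t1 t2 where P: "nat_pair C D F G t1 t2" and th: "\<forall>x\<in>gobj C. \<theta> x = t1 (gid C x)"
    using N unfolding nat_trans_def by blast
  have P1: "\<And>a. a \<in> gobj C \<Longrightarrow> t1 a \<in> gobj D \<and> t2 a \<in> gobj D" using P unfolding nat_pair_def by blast
  have P2: "\<And>a. a \<in> gobj C \<Longrightarrow> gdef D (t1 a) (F a) \<and> gdef D (G a) (t2 a) \<and>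
        gcmp D (t1 a) (F a) = gcmp D (G a) (t2 a)" using P unfolding nat_pair_def by blast
  have P3: "\<And>a b. a \<in> gobj C \<Longrightarrow> b \<in> gobj C \<Longrightarrow> gtgt C a = gtgt C b \<Longrightarrow> t1 a = t1 b"
    using P unfolding nat_pair_def by blast
  have P4: "\<And>a b. a \<in> gobj C \<Longrightarrow> b \<in> gobj C \<Longrightarrow> gsrc C a = gsrc C b \<Longrightarrow> t2 a = t2 b"
    using P unfolding nat_pair_def by blast
  have key: "t1 (gid C y) = t2 (gid C y) \<and> t1 (gid C y) = gcmp D (t1 (gid C y)) (gid D (F y)) \<and>
       t2 (gid C y) = gcmp D (gid D (G y)) (t2 (gid C y))" if y: "y \<in> gobj C" for y
  proof -
    let ?u = "gid C y"
    have u: "?u \<in> gobj C" using gid_in[OF GC y] .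
    have e: "gcmp D (t1 ?u) (gid D (F y)) = gcmp D (gid D (G y)) (t2 ?u)"
      using P2[OF u] gf_gid[OF FF y] gf_gid[OF FG y] by simp
    have r: "gcmp D (t1 ?u) (gid D (F y)) = t1 ?u"
      using P2[OF u] gf_gid[OF FF y] gid_right[OF GD gf_in[OF FF y] P1[OF u, THEN conjunct1]] by simp
    have l: "gcmp D (gid D (G y)) (t2 ?u) = t2 ?u"
      using P2[OF u] gf_gid[OF FG y] gid_left[OF GD gf_in[OF FG y] P1[OF u, THEN conjunct2]] by simp
    show ?thesis using e r l by simp
  qed
  have A: "\<theta> x \<in> gobj D \<and> gsrc D (\<theta> x) = F x \<and> gtgt D (\<theta> x) = G x" if x: "x \<in> gobj C" for x
  proof -
    let ?u = "gid C x"
    have u: "?u \<in> gobj C" using gid_in[OF GC x] .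
    have d1: "gdef D (t1 ?u) (gid D (F x))" using P2[OF u] gf_gid[OF FF x] by simp
    have d2: "gdef D (gid D (G x)) (t2 ?u)" using P2[OF u] gf_gid[OF FG x] by simp
    have k1: "t1 ?u = gcmp D (t1 ?u) (gid D (F x))" using key[OF x] by blast
    have k2: "t1 ?u = gcmp D (gid D (G x)) (t2 ?u)" using key[OF x] by (elim conjE) (erule trans, assumption)
    have "gsrc D (t1 ?u) = gsrc D (gcmp D (t1 ?u) (gid D (F x)))" using k1 by (rule arg_cong)
    also have "\<dots> = gsrc D (gid D (F x))"
      by (rule gc_src_cmp[OF GD P1[OF u, THEN conjunct1] gid_in[OF GD gf_in[OF FF x]] d1])
    also have "\<dots> = F x" by (rule gid_src[OF GD gf_in[OF FF x]])
    finally have s1: "gsrc D (t1 ?u) = F x" .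
    have "gtgt D (t1 ?u) = gtgt D (gcmp D (gid D (G x)) (t2 ?u))" using k2 by (rule arg_cong)
    also have "\<dots> = gtgt D (gid D (G x))"
      by (rule gc_tgt_cmp[OF GD gid_in[OF GD gf_in[OF FG x]] P1[OF u, THEN conjunct2] d2])
    also have "\<dots> = G x" by (rule gid_tgt[OF GD gf_in[OF FG x]])
    finally have s2: "gtgt D (t1 ?u) = G x" .
    show ?thesis using s1 s2 using th x P1[OF u] by simp
  qed
  have B: "gcmp D (\<theta> (gtgt C a)) (F a) = gcmp D (G a) (\<theta> (gsrc C a))" if a: "a \<in> gobj C" for a
  proof -
    have t: "gtgt C a \<in> gobj C" "gsrc C a \<in> gobj C" using gc_src[OF GC a] gc_tgt[OF GC a] by auto
    have "\<theta> (gtgt C a) = t1 a" using th t P3[OF gid_in[OF GC t(1)] a] GC by simp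
    moreover have "\<theta> (gsrc C a) = t2 a" using th t P4[OF gid_in[OF GC t(2)] a] GC key[OF t(2)] by simp
    ultimately show ?thesis using P2[OF a] by simp
  qed
  show ?thesis unfolding natural_def using FF FG A B by blast
qed

lemma natural_to_nat:
  assumes GC: "generalized_category C" and GD: "generalized_category D"
    and N: "natural C D F G \<theta>"
  shows "nat_trans C D F G \<theta>"
proof -
  have FF: "gfunctor C D F" and FG: "gfunctor C D G" using N unfolding natural_def by auto
  have A: "\<And>x. x \<in> gobj C \<Longrightarrow> \<theta> x \<in> gobj D \<and> gsrc D (\<theta> x) = F x \<and> gtgt D (\<theta> x) = G x"
    using N unfolding natural_def by auto
  have B: "\<And>a. a \<in> gobj C \<Longrightarrow> gcmp D (\<theta> (gtgt C a)) (F a) = gcmp D (G a) (\<theta> (gsrc C a))"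
    using N unfolding natural_def by auto
  have "nat_pair C D F G (\<lambda>a. \<theta> (gtgt C a)) (\<lambda>a. \<theta> (gsrc C a))"
    unfolding nat_pair_def
  proof (intro conjI ballI impI)
    fix a assume a: "a \<in> gobj C"
    have t: "gtgt C a \<in> gobj C" "gsrc C a \<in> gobj C" using gc_src[OF GC a] gc_tgt[OF GC a] by auto
    show "\<theta> (gtgt C a) \<in> gobj D" "\<theta> (gsrc C a) \<in> gobj D" using A t by auto
    show "gdef D (\<theta> (gtgt C a)) (F a)"
      by (rule gdef_eq[OF GD gf_in[OF FF a]]) (simp add: A t gf_tgt[OF FF a])
    show "gdef D (G a) (\<theta> (gsrc C a))"
      by (rule gdef_eq[OF GD]) (simp_all add: A t gf_src[OF FG a])
    show "gcmp D (\<theta> (gtgt C a)) (F a) = gcmp D (G a) (\<theta> (gsrc C a))" using B a .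
  next
    fix a b assume "a \<in> gobj C" "b \<in> gobj C" "gtgt C a = gtgt C b"
    then show "\<theta> (gtgt C a) = \<theta> (gtgt C b)" by simp
  next
    fix a b assume "a \<in> gobj C" "b \<in> gobj C" "gsrc C a = gsrc C b"
    then show "\<theta> (gsrc C a) = \<theta> (gsrc C b)" by simp
  qed
  moreover have "\<forall>x\<in>gobj C. \<theta> x = \<theta> (gtgt C (gid C x))" using GC by simp
  ultimately show ?thesis unfolding nat_trans_def using FF FG by blast
qed

lemma nat_iff: "generalized_category C \<Longrightarrow> generalized_category D \<Longrightarrow>
  nat_trans C D F G \<theta> \<longleftrightarrow> natural C D F G \<theta>"
  using nat_to_natural natural_to_nat by blast

lemma cmp_in[simp]: "generalized_category C \<Longrightarrow> a \<in> gobj C \<Longrightarrow> b \<in> gobj C \<Longrightarrow> gsrc C a = gtgt C b \<Longrightarrow> gcmp C a b \<in> gobj C"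
  using gc_cmp[of C a b] gdef_eq[of C b a] by simp
lemma cmp_src[simp]: "generalized_category C \<Longrightarrow> a \<in> gobj C \<Longrightarrow> b \<in> gobj C \<Longrightarrow> gsrc C a = gtgt C b \<Longrightarrow> gsrc C (gcmp C a b) = gsrc C b"
  using gc_src_cmp[of C a b] gdef_eq[of C b a] by simp
lemma cmp_tgt[simp]: "generalized_category C \<Longrightarrow> a \<in> gobj C \<Longrightarrow> b \<in> gobj C \<Longrightarrow> gsrc C a = gtgt C b \<Longrightarrow> gtgt C (gcmp C a b) = gtgt C a"
  using gc_tgt_cmp[of C a b] gdef_eq[of C b a] by simp
lemma cmp_assoc[simp]: "generalized_category C \<Longrightarrow> a \<in> gobj C \<Longrightarrow> b \<in> gobj C \<Longrightarrow> c \<in> gobj C \<Longrightarrow>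
   gsrc C a = gtgt C b \<Longrightarrow> gsrc C b = gtgt C c \<Longrightarrow> gcmp C (gcmp C a b) c = gcmp C a (gcmp C b c)"
  using gc_assoc[of C a b c] gdef_eq[of C b a] gdef_eq[of C c b] by simp
lemma f_cmp[simp]: "generalized_category C \<Longrightarrow> gfunctor C D F \<Longrightarrow> a \<in> gobj C \<Longrightarrow> b \<in> gobj C \<Longrightarrow> gsrc C a = gtgt C b \<Longrightarrow>
   F (gcmp C a b) = gcmp D (F a) (F b)"
  using gf_cmp[of C D F a b] gdef_eq[of C b a] by simp
lemma f_src[simp]: "gfunctor C D F \<Longrightarrow> a \<in> gobj C \<Longrightarrow> gsrc D (F a) = F (gsrc C a)"
  using gf_src by metis
lemma f_tgt[simp]: "gfunctor C D F \<Longrightarrow> a \<in> gobj C \<Longrightarrow> gtgt D (F a) = F (gtgt C a)"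
  using gf_tgt by metis
lemma n_in[simp]: "natural C D F G \<theta> \<Longrightarrow> x \<in> gobj C \<Longrightarrow> \<theta> x \<in> gobj D"
  unfolding natural_def by blast
lemma n_src[simp]: "natural C D F G \<theta> \<Longrightarrow> x \<in> gobj C \<Longrightarrow> gsrc D (\<theta> x) = F x"
  unfolding natural_def by blast
lemma n_tgt[simp]: "natural C D F G \<theta> \<Longrightarrow> x \<in> gobj C \<Longrightarrow> gtgt D (\<theta> x) = G x"
  unfolding natural_def by blast
lemma n_eq: "natural C D F G \<theta> \<Longrightarrow> a \<in> gobj C \<Longrightarrow> gcmp D (\<theta> (gtgt C a)) (F a) = gcmp D (G a) (\<theta> (gsrc C a))"
  unfolding natural_def by blast
lemma n_F: "natural C D F G \<theta> \<Longrightarrow> gfunctor C D F" unfolding natural_def by blast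
lemma n_G: "natural C D F G \<theta> \<Longrightarrow> gfunctor C D G" unfolding natural_def by blast
lemma gid_in'[simp]: "generalized_category C \<Longrightarrow> a \<in> gobj C \<Longrightarrow> gid C a \<in> gobj C" by (rule gid_in)
lemma gid_l[simp]: "generalized_category C \<Longrightarrow> a \<in> gobj C \<Longrightarrow> c \<in> gobj C \<Longrightarrow> gtgt C c = a \<Longrightarrow> gcmp C (gid C a) c = c"
  using gid_left[of C a c] gdef_eq[of C c "gid C a"] gid_src[of C a] by simp
lemma gid_r[simp]: "generalized_category C \<Longrightarrow> a \<in> gobj C \<Longrightarrow> c \<in> gobj C \<Longrightarrow> gsrc C c = a \<Longrightarrow> gcmp C c (gid C a) = c"
  using gid_right[of C a c] gdef_eq[of C "gid C a" c] gid_tgt[of C a] gid_in[of C a] by simp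
lemma f_gid[simp]: "gfunctor C D F \<Longrightarrow> a \<in> gobj C \<Longrightarrow> F (gid C a) = gid D (F a)"
  by (rule gf_gid)
declare gc_src[simp] gc_tgt[simp] gf_in[simp]

lemma vcomp_nat:
  assumes GC: "generalized_category C" and GD: "generalized_category D"
    and A: "natural C D F G \<alpha>" and B: "natural C D G H \<beta>"
  shows "natural C D F H (vcomp D \<beta> \<alpha>)"
proof -
  note FF = n_F[OF A] and FG = n_G[OF A] and FH = n_G[OF B]
  have X: "vcomp D \<beta> \<alpha> x \<in> gobj D \<and> gsrc D (vcomp D \<beta> \<alpha> x) = F x \<and> gtgt D (vcomp D \<beta> \<alpha> x) = H x"
    if x: "x \<in> gobj C" for x
    using x A B GD by (simp add: vcomp_def)
  have Y: "gcmp D (vcomp D \<beta> \<alpha> (gtgt C a)) (F a) = gcmp D (H a) (vcomp D \<beta> \<alpha> (gsrc C a))"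
    if a: "a \<in> gobj C" for a
  proof -
    let ?t = "gtgt C a" and ?s = "gsrc C a"
    have t: "?t \<in> gobj C" "?s \<in> gobj C" using GC a by auto
    have "gcmp D (vcomp D \<beta> \<alpha> ?t) (F a) = gcmp D (\<beta> ?t) (gcmp D (\<alpha> ?t) (F a))"
      using A B GC GD a t FF by (simp add: vcomp_def)
    also have "\<dots> = gcmp D (\<beta> ?t) (gcmp D (G a) (\<alpha> ?s))" using n_eq[OF A a] by simp
    also have "\<dots> = gcmp D (gcmp D (\<beta> ?t) (G a)) (\<alpha> ?s)"
      using A B GC GD a t FG by simp
    also have "\<dots> = gcmp D (gcmp D (H a) (\<beta> ?s)) (\<alpha> ?s)" using n_eq[OF B a] by simp
    also have "\<dots> = gcmp D (H a) (vcomp D \<beta> \<alpha> ?s)"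
      using A B GC GD a t FH by (simp add: vcomp_def)
    finally show ?thesis .
  qed
  show ?thesis unfolding natural_def using FF FH X Y by blast
qed

lemma id_nat:
  assumes GC: "generalized_category C" and GD: "generalized_category D" and FF: "gfunctor C D F"
  shows "natural C D F F (idtrans D F)"
  unfolding natural_def idtrans_def using GC GD FF by simp

lemma vassoc:
  assumes GC: "generalized_category C" and GD: "generalized_category D"
    and A: "natural C D F G \<alpha>" and B: "natural C D G H \<beta>" and Ga: "natural C D H J \<gamma>"
  shows "eq_on (gobj C) (vcomp D \<gamma> (vcomp D \<beta> \<alpha>)) (vcomp D (vcomp D \<gamma> \<beta>) \<alpha>)"
  unfolding eq_on_def vcomp_def using GC GD A B Ga by simp

lemma vunit:
  assumes GC: "generalized_category C" and GD: "generalized_category D"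
    and A: "natural C D F G \<alpha>"
  shows "eq_on (gobj C) (vcomp D (idtrans D G) \<alpha>) \<alpha> \<and> eq_on (gobj C) (vcomp D \<alpha> (idtrans D F)) \<alpha>"
  unfolding eq_on_def vcomp_def idtrans_def using GC GD A n_F[OF A] n_G[OF A] by simp

lemma hcomp_nat:
  assumes GC: "generalized_category C" and GD: "generalized_category D" and GE: "generalized_category E"
    and A: "natural C D F G \<alpha>" and B: "natural D E F' G' \<beta>"
  shows "natural C E (F' \<circ> F) (G' \<circ> G) (hcomp E G' F \<beta> \<alpha>)"
proof -
  note FF = n_F[OF A] and FG = n_G[OF A] and FF' = n_F[OF B] and FG' = n_G[OF B]
  have X: "hcomp E G' F \<beta> \<alpha> x \<in> gobj E \<and> gsrc E (hcomp E G' F \<beta> \<alpha> x) = (F' \<circ> F) x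
     \<and> gtgt E (hcomp E G' F \<beta> \<alpha> x) = (G' \<circ> G) x"
    if x: "x \<in> gobj C" for x
    using x A B GD GE FF FG FF' FG' by (simp add: hcomp_def)
  have Y: "gcmp E (hcomp E G' F \<beta> \<alpha> (gtgt C a)) ((F' \<circ> F) a) = gcmp E ((G' \<circ> G) a) (hcomp E G' F \<beta> \<alpha> (gsrc C a))"
    if a: "a \<in> gobj C" for a
  proof -
    let ?t = "gtgt C a" and ?s = "gsrc C a"
    have t: "?t \<in> gobj C" "?s \<in> gobj C" using GC a by auto
    have Fa: "F a \<in> gobj D" using FF a by simp
    have nb: "gcmp E (\<beta> (F ?t)) (F' (F a)) = gcmp E (G' (F a)) (\<beta> (F ?s))"
      using n_eq[OF B Fa] FF a by simp
    have na: "gcmp D (\<alpha> ?t) (F a) = gcmp D (G a) (\<alpha> ?s)" using n_eq[OF A a] .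
    have "gcmp E (hcomp E G' F \<beta> \<alpha> ?t) ((F' \<circ> F) a) = gcmp E (G' (\<alpha> ?t)) (gcmp E (\<beta> (F ?t)) (F' (F a)))"
      using A B GC GD GE a t FF FG FF' FG' by (simp add: hcomp_def)
    also have "\<dots> = gcmp E (G' (\<alpha> ?t)) (gcmp E (G' (F a)) (\<beta> (F ?s)))" using nb by simp
    also have "\<dots> = gcmp E (G' (gcmp D (\<alpha> ?t) (F a))) (\<beta> (F ?s))"
      using A B GC GD GE a t FF FG FF' FG' by simp
    also have "\<dots> = gcmp E (G' (gcmp D (G a) (\<alpha> ?s))) (\<beta> (F ?s))" using na by simp
    also have "\<dots> = gcmp E ((G' \<circ> G) a) (hcomp E G' F \<beta> \<alpha> ?s)"
      using A B GC GD GE a t FF FG FF' FG' by (simp add: hcomp_def)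
    finally show ?thesis .
  qed
  show ?thesis unfolding natural_def using gf_comp[OF GC FF FF'] gf_comp[OF GC FG FG'] X Y by blast
qed

lemma hassoc:
  assumes GC: "generalized_category C" and GD: "generalized_category D" and GE: "generalized_category E"
    and GK: "generalized_category K"
    and A: "natural C D F G \<alpha>" and B: "natural D E F' G' \<beta>" and Ga: "natural E K F'' G'' \<gamma>"
  shows "eq_on (gobj C) (hcomp K G'' (F' \<circ> F) \<gamma> (hcomp E G' F \<beta> \<alpha>))
                       (hcomp K (G'' \<circ> G') F (hcomp K G'' F' \<gamma> \<beta>) \<alpha>)"
  unfolding eq_on_def hcomp_def using GC GD GE GK A B Ga n_F[OF A] n_G[OF A] n_F[OF B] n_G[OF B]
    n_F[OF Ga] n_G[OF Ga] by simp

lemma hunit: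
  assumes GC: "generalized_category C" and GD: "generalized_category D"
    and A: "natural C D F G \<alpha>"
  shows "eq_on (gobj C) (hcomp D id F (idtrans D id) \<alpha>) \<alpha> \<and>
        eq_on (gobj C) (hcomp D G id \<alpha> (idtrans C id)) \<alpha>"
  unfolding eq_on_def hcomp_def idtrans_def using GC GD A n_F[OF A] n_G[OF A] by simp

lemma hid:
  assumes GC: "generalized_category C" and GD: "generalized_category D" and GE: "generalized_category E"
    and FF: "gfunctor C D F" and FF': "gfunctor D E F'"
  shows "eq_on (gobj C) (hcomp E F' F (idtrans E F') (idtrans D F)) (idtrans E (F' \<circ> F))"
  unfolding eq_on_def hcomp_def idtrans_def using GC GD GE FF FF' by simp

lemma interchange:
  assumes GC: "generalized_category C" and GD: "generalized_category D" and GE: "generalized_category E"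
    and A: "natural C D F G \<alpha>" and A': "natural C D G H \<alpha>'"
    and B: "natural D E F' G' \<beta>" and B': "natural D E G' H' \<beta>'"
  shows "eq_on (gobj C) (hcomp E H' F (vcomp E \<beta>' \<beta>) (vcomp D \<alpha>' \<alpha>))
                       (vcomp E (hcomp E H' G \<beta>' \<alpha>') (hcomp E G' F \<beta> \<alpha>))"
  unfolding eq_on_def
proof
  fix x assume x: "x \<in> gobj C"
  note fs = n_F[OF A] n_G[OF A] n_G[OF A'] n_F[OF B] n_G[OF B] n_G[OF B']
  have Fx: "F x \<in> gobj D" "\<alpha> x \<in> gobj D" using x fs A by auto
  have nb: "gcmp E (\<beta>' (G x)) (G' (\<alpha> x)) = gcmp E (H' (\<alpha> x)) (\<beta>' (F x))"
    using n_eq[OF B' Fx(2)] A x by simp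
  have "hcomp E H' F (vcomp E \<beta>' \<beta>) (vcomp D \<alpha>' \<alpha>) x
      = gcmp E (H' (\<alpha>' x)) (gcmp E (H' (\<alpha> x)) (gcmp E (\<beta>' (F x)) (\<beta> (F x))))"
    using GC GD GE A A' B B' fs x by (simp add: hcomp_def vcomp_def)
  also have "\<dots> = gcmp E (H' (\<alpha>' x)) (gcmp E (gcmp E (H' (\<alpha> x)) (\<beta>' (F x))) (\<beta> (F x)))"
    using GC GD GE A A' B B' fs x by simp
  also have "\<dots> = gcmp E (H' (\<alpha>' x)) (gcmp E (gcmp E (\<beta>' (G x)) (G' (\<alpha> x))) (\<beta> (F x)))"
    using nb by simp
  also have "\<dots> = vcomp E (hcomp E H' G \<beta>' \<alpha>') (hcomp E G' F \<beta> \<alpha>) x"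
    using GC GD GE A A' B B' fs x by (simp add: hcomp_def vcomp_def)
  finally show "hcomp E H' F (vcomp E \<beta>' \<beta>) (vcomp D \<alpha>' \<alpha>) x = vcomp E (hcomp E H' G \<beta>' \<alpha>') (hcomp E G' F \<beta> \<alpha>) x" .
qed

theorem mainTheorem1:
  fixes C :: "'a gcat" and D :: "'b gcat" and E :: "'c gcat" and K :: "'d gcat"
  assumes "generalized_category C" and "generalized_category D"
      and "generalized_category E" and "generalized_category K"
  shows
   \<comment> \<open>1-cells: identities, composition, associativity and unit laws\<close>
   "gfunctor C C id \<and>
    (\<forall>F G. gfunctor C D F \<longrightarrow> gfunctor D E G \<longrightarrow> gfunctor C E (G \<circ> F)) \<and>
    (\<forall>F G H. gfunctor C D F \<longrightarrow> gfunctor D E G \<longrightarrow> gfunctor E K H \<longrightarrow>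
        eq_on (gobj C) ((H \<circ> G) \<circ> F) (H \<circ> (G \<circ> F))) \<and>
    (\<forall>F. gfunctor C D F \<longrightarrow> eq_on (gobj C) (id \<circ> F) F \<and> eq_on (gobj C) (F \<circ> id) F) \<and>
   \<comment> \<open>vertical composition and identity 2-cells\<close>
    (\<forall>F G H \<alpha> \<beta>. nat_trans C D F G \<alpha> \<longrightarrow> nat_trans C D G H \<beta> \<longrightarrow>
        nat_trans C D F H (vcomp D \<beta> \<alpha>)) \<and>
    (\<forall>F. gfunctor C D F \<longrightarrow> nat_trans C D F F (idtrans D F)) \<and>
    (\<forall>F G H J \<alpha> \<beta> \<gamma>. nat_trans C D F G \<alpha> \<longrightarrow> nat_trans C D G H \<beta> \<longrightarrow> nat_trans C D H J \<gamma> \<longrightarrow>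
        eq_on (gobj C) (vcomp D \<gamma> (vcomp D \<beta> \<alpha>)) (vcomp D (vcomp D \<gamma> \<beta>) \<alpha>)) \<and>
    (\<forall>F G \<alpha>. nat_trans C D F G \<alpha> \<longrightarrow>
        eq_on (gobj C) (vcomp D (idtrans D G) \<alpha>) \<alpha> \<and> eq_on (gobj C) (vcomp D \<alpha> (idtrans D F)) \<alpha>) \<and>
   \<comment> \<open>horizontal composition\<close>
    (\<forall>F G F' G' \<alpha> \<beta>. nat_trans C D F G \<alpha> \<longrightarrow> nat_trans D E F' G' \<beta> \<longrightarrow>
        nat_trans C E (F' \<circ> F) (G' \<circ> G) (hcomp E G' F \<beta> \<alpha>)) \<and>
    (\<forall>F G F' G' F'' G'' \<alpha> \<beta> \<gamma>. nat_trans C D F G \<alpha> \<longrightarrow> nat_trans D E F' G' \<beta> \<longrightarrow>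
        nat_trans E K F'' G'' \<gamma> \<longrightarrow>
        eq_on (gobj C) (hcomp K G'' (F' \<circ> F) \<gamma> (hcomp E G' F \<beta> \<alpha>))
                       (hcomp K (G'' \<circ> G') F (hcomp K G'' F' \<gamma> \<beta>) \<alpha>)) \<and>
    (\<forall>F G \<alpha>. nat_trans C D F G \<alpha> \<longrightarrow>
        eq_on (gobj C) (hcomp D id F (idtrans D id) \<alpha>) \<alpha> \<and>
        eq_on (gobj C) (hcomp D G id \<alpha> (idtrans C id)) \<alpha>) \<and>
   \<comment> \<open>horizontal composite of identity 2-cells, and the interchange law\<close>
    (\<forall>F F'. gfunctor C D F \<longrightarrow> gfunctor D E F' \<longrightarrow>
        eq_on (gobj C) (hcomp E F' F (idtrans E F') (idtrans D F)) (idtrans E (F' \<circ> F))) \<and>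
    (\<forall>F G H F' G' H' \<alpha> \<alpha>' \<beta> \<beta>'. nat_trans C D F G \<alpha> \<longrightarrow> nat_trans C D G H \<alpha>' \<longrightarrow>
        nat_trans D E F' G' \<beta> \<longrightarrow> nat_trans D E G' H' \<beta>' \<longrightarrow>
        eq_on (gobj C) (hcomp E H' F (vcomp E \<beta>' \<beta>) (vcomp D \<alpha>' \<alpha>))
                       (vcomp E (hcomp E H' G \<beta>' \<alpha>') (hcomp E G' F \<beta> \<alpha>)))"
proof -
  note GC = assms(1) and GD = assms(2) and GE = assms(3) and GK = assms(4)
  note NCD = nat_iff[OF GC GD] and NDE = nat_iff[OF GD GE] and NEK = nat_iff[OF GE GK] and NCE = nat_iff[OF GC GE]
  show ?thesis
  proof (intro conjI allI impI)
    show "gfunctor C C id" by (rule gf_id[OF GC])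
  next
    fix F G assume "gfunctor C D F" "gfunctor D E G"
    then show "gfunctor C E (G \<circ> F)" using gf_comp[OF GC] by blast
  next
    fix F G H show "eq_on (gobj C) ((H \<circ> G) \<circ> F) (H \<circ> (G \<circ> F))" by (simp add: eq_on_def)
  next
    fix F :: "'a \<Rightarrow> 'b" show "eq_on (gobj C) (id \<circ> F) F" by (simp add: eq_on_def)
  next
    fix F :: "'a \<Rightarrow> 'b" show "eq_on (gobj C) (F \<circ> id) F" by (simp add: eq_on_def)
  next
    fix F G H \<alpha> \<beta> assume "nat_trans C D F G \<alpha>" "nat_trans C D G H \<beta>"
    then show "nat_trans C D F H (vcomp D \<beta> \<alpha>)" using vcomp_nat[OF GC GD] NCD by blast
  next
    fix F assume "gfunctor C D F"
    then show "nat_trans C D F F (idtrans D F)" using id_nat[OF GC GD] NCD by blast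
  next
    fix F G H J \<alpha> \<beta> \<gamma> assume "nat_trans C D F G \<alpha>" "nat_trans C D G H \<beta>" "nat_trans C D H J \<gamma>"
    then show "eq_on (gobj C) (vcomp D \<gamma> (vcomp D \<beta> \<alpha>)) (vcomp D (vcomp D \<gamma> \<beta>) \<alpha>)"
      using vassoc[OF GC GD] NCD by blast
  next
    fix F G \<alpha> assume "nat_trans C D F G \<alpha>"
    then show "eq_on (gobj C) (vcomp D (idtrans D G) \<alpha>) \<alpha>" using vunit[OF GC GD] NCD by blast
  next
    fix F G \<alpha> assume "nat_trans C D F G \<alpha>"
    then show "eq_on (gobj C) (vcomp D \<alpha> (idtrans D F)) \<alpha>" using vunit[OF GC GD] NCD by blast
  next
    fix F G F' G' \<alpha> \<beta> assume "nat_trans C D F G \<alpha>" "nat_trans D E F' G' \<beta>"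
    then show "nat_trans C E (F' \<circ> F) (G' \<circ> G) (hcomp E G' F \<beta> \<alpha>)"
      using hcomp_nat[OF GC GD GE] NCD NDE NCE by blast
  next
    fix F G F' G' F'' G'' \<alpha> \<beta> \<gamma> assume "nat_trans C D F G \<alpha>" "nat_trans D E F' G' \<beta>"
        "nat_trans E K F'' G'' \<gamma>"
    then show "eq_on (gobj C) (hcomp K G'' (F' \<circ> F) \<gamma> (hcomp E G' F \<beta> \<alpha>))
                       (hcomp K (G'' \<circ> G') F (hcomp K G'' F' \<gamma> \<beta>) \<alpha>)"
      using hassoc[OF GC GD GE GK] NCD NDE NEK by blast
  next
    fix F G \<alpha> assume "nat_trans C D F G \<alpha>"
    then show "eq_on (gobj C) (hcomp D id F (idtrans D id) \<alpha>) \<alpha>" using hunit[OF GC GD] NCD by blast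
  next
    fix F G \<alpha> assume "nat_trans C D F G \<alpha>"
    then show "eq_on (gobj C) (hcomp D G id \<alpha> (idtrans C id)) \<alpha>" using hunit[OF GC GD] NCD by blast
  next
    fix F F' assume "gfunctor C D F" "gfunctor D E F'"
    then show "eq_on (gobj C) (hcomp E F' F (idtrans E F') (idtrans D F)) (idtrans E (F' \<circ> F))"
      using hid[OF GC GD GE] by blast
  next
    fix F G H F' G' H' \<alpha> \<alpha>' \<beta> \<beta>' assume "nat_trans C D F G \<alpha>" "nat_trans C D G H \<alpha>'"
        "nat_trans D E F' G' \<beta>" "nat_trans D E G' H' \<beta>'"
    then show "eq_on (gobj C) (hcomp E H' F (vcomp E \<beta>' \<beta>) (vcomp D \<alpha>' \<alpha>))
                       (vcomp E (hcomp E H' G \<beta>' \<alpha>') (hcomp E G' F \<beta> \<alpha>))"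
      using interchange[OF GC GD GE] NCD NDE by blast
  qed
qed

end
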